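(* Let $O_{(4,1)}(x,y,z,w)=x^4z^2w^2+y^4x^2w^2+z^4x^2y^2+w^4y^2z^2-4x^2y^2z^2w^2$, let $0\le a\le1$ and $\alpha,\beta\in\mathbb R$. If $F_1=a\,O_{(4,1)}+x^2yz^2w(\alpha y^2+\beta w^2)$ is positive semidefinite on $\mathbb R^4$, then $\alpha=\beta=0$. *)

theory Defs
  imports Complex_Main
begin

definition O41 :: "real \<Rightarrow> real \<Rightarrow> real \<Rightarrow> real \<Rightarrow> real" where
  "O41 x y z w = x^4*z^2*w^2 + y^4*x^2*w^2 + z^4*x^2*y^2 + w^4*y^2*z^2 - 4*x^2*y^2*z^2*w^2"

end

theory Submission
  imports Defs
begin

lemma F_cd: "a * O41 c c c d + c^2*c*c^2*d*(-\<beta>*c^2 + \<beta>*d^2)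
        = c^4*(c^2-d^2)*(a*(c^2-d^2) - \<beta>*c*d)"
  unfolding O41_def by (simp add: algebra_simps power2_eq_square power3_eq_cube power4_eq_xxxx power_numeral_reduce)

theorem lemma3:
  fixes a \<alpha> \<beta> :: real
  assumes "0 \<le> a" and "a \<le> 1"
    and psd: "\<forall>x y z w :: real.
      a * O41 x y z w + x^2*y*z^2*w*(\<alpha>*y^2 + \<beta>*w^2) \<ge> 0"
  shows "\<alpha> = 0 \<and> \<beta> = 0"
proof -
  have "a * O41 1 1 1 1 + 1^2*1*1^2*1*(\<alpha>*1^2 + \<beta>*1^2) \<ge> 0" using psd by blast
  hence h1: "\<alpha> + \<beta> \<ge> 0" by (simp add: O41_def)
  have "a * O41 1 1 1 (-1) + 1^2*1*1^2*(-1)*(\<alpha>*1^2 + \<beta>*(-1)^2) \<ge> 0" using psd by blast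
  hence h2: "\<alpha> + \<beta> \<le> 0" by (simp add: O41_def)
  have ab: "\<alpha> = -\<beta>" using h1 h2 by linarith
  have key: "\<And>c d. c^4*(c^2-d^2)*(a*(c^2-d^2) - \<beta>*c*d) \<ge> 0"
  proof -
    fix c d :: real
    have "a * O41 c c c d + c^2*c*c^2*d*(\<alpha>*c^2 + \<beta>*d^2) \<ge> 0" using psd by blast
    also have "a * O41 c c c d + c^2*c*c^2*d*(\<alpha>*c^2 + \<beta>*d^2)
        = c^4*(c^2-d^2)*(a*(c^2-d^2) - \<beta>*c*d)"
      unfolding ab by (rule F_cd)
    finally show "c^4*(c^2-d^2)*(a*(c^2-d^2) - \<beta>*c*d) \<ge> 0" .
  qed
  have "\<beta> = 0"
  proof (rule ccontr)
    assume bn: "\<beta> \<noteq> 0"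
    show False
    proof (cases "\<beta> > 0")
      case True
      define c where "c = 2 + \<beta>"
      have cp: "c > 0" using True c_def by simp
      have e: "c^2 - 2^2 = \<beta>*(4+\<beta>)" unfolding c_def by (simp add: algebra_simps power2_eq_square)
      have pos: "c^2 - 2^2 > 0" unfolding e using True by simp
      have "a*(c^2-2^2) \<le> \<beta>*(4+\<beta>)" using mult_right_mono[OF assms(2) less_imp_le[OF pos]] e by simp
      moreover have "\<beta>*c*2 = \<beta>*(4+\<beta>) + \<beta>*\<beta>" unfolding c_def by (simp add: algebra_simps)
      ultimately have neg: "a*(c^2-2^2) - \<beta>*c*2 < 0" using mult_pos_pos[OF True True] by linarith
      have "c^4*(c^2-2^2) > 0" using cp pos by simp
      hence "c^4*(c^2-2^2)*(a*(c^2-2^2) - \<beta>*c*2) < 0" using neg mult_pos_neg by blast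
      thus False using key[of c 2] by linarith
    next
      case False
      hence bneg: "\<beta> < 0" using bn by simp
      define c where "c = 2 - \<beta>"
      have cp: "c > 0" using bneg c_def by simp
      have e: "c^2 - (-2)^2 = (-\<beta>)*(4-\<beta>)" unfolding c_def by (simp add: algebra_simps power2_eq_square)
      have pos: "c^2 - (-2)^2 > 0" unfolding e using bneg by (simp add: mult_neg_pos)
      have "a*(c^2-(-2)^2) \<le> (-\<beta>)*(4-\<beta>)" using mult_right_mono[OF assms(2) less_imp_le[OF pos]] e by simp
      moreover have "\<beta>*c*(-2) = (-\<beta>)*(4-\<beta>) + \<beta>*\<beta>" unfolding c_def by (simp add: algebra_simps)
      ultimately have neg: "a*(c^2-(-2)^2) - \<beta>*c*(-2) < 0" using mult_neg_neg[OF bneg bneg] by linarith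
      have "c^4*(c^2-(-2)^2) > 0" using cp pos by simp
      hence "c^4*(c^2-(-2)^2)*(a*(c^2-(-2)^2) - \<beta>*c*(-2)) < 0" using neg mult_pos_neg by blast
      thus False using key[of c "-2"] by linarith
    qed
  qed
  thus ?thesis using ab by simp
qed

end
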